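(* Let $n\ge1$, $\eta>0$, $\gamma\ne0$, nonzero vectors $X_1,\dots,X_n\in\mathbb{R}^d$, and reals $a_1,\dots,a_n>0$. Let $f_a(z)=z\big(z^2+(a-2)z+1-2a\big)$. For an initial vector $z^{(0)}=(z_1^{(0)},\dots,z_n^{(0)})$ define $z_i^{(t+1)}=f_{a_i}(z_i^{(t)})$ and $$\ell_t=\sum_{i=1}^n\frac{n\,(z_i^{(t)})^2}{2\eta^2\gamma^2\|X_i\|^4}.$$ (This is the training loss $\ell(w^{(t)})$ of gradient descent in the mutually orthogonal generalized phase retrieval problem $\min_w\frac1{2n}\sum_i(\frac\gamma2(X_i^\top w)^2+c(X_i)X_i^\top w-y_i)^2$, with $z_i^{(t)}=\frac{\eta\gamma\|X_i\|^2}{n}(g(w^{(t)};X_i)-y_i)$ and $a_i=\frac{\eta\gamma\|X_i\|^2}{n}(y_i+\frac{c(X_i)^2}{2\gamma})$.) Then for Lebesgue-almost every $z^{(0)}\in\{z:-a_i\le z_i\le2\text{ for all }i\}$: \begin{itemize} \item if $0<\max_i a_i\le1$, then $\lim_{t\to\infty}\ell_t=0$; moreover if $0<\max_ia_i\le2\sqrt2-2$, then $(\ell_t)_{t\ge0}$ is decreasing; \item if $1<\max_ia_i\le2$, then $(\ell_t)_{t\ge0}$ is bounded and does not converge to $0$; \item if $\max_ia_i>2$, then $\lim_{t\to\infty}\ell_t=+\infty$. \end{itemize} *)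

theory Defs
  imports "HOL-Analysis.Analysis"
begin

definition fmap :: "real \<Rightarrow> real \<Rightarrow> real" where
  "fmap a z = z * (z^2 + (a - 2) * z + 1 - 2 * a)"

definition traj :: "('n::finite \<Rightarrow> real) \<Rightarrow> real ^ 'n \<Rightarrow> nat \<Rightarrow> 'n \<Rightarrow> real" where
  "traj a z0 t i = (fmap (a i) ^^ t) (z0 $ i)"

definition loss :: "real \<Rightarrow> real \<Rightarrow> ('n::finite \<Rightarrow> real ^ 'd) \<Rightarrow> ('n \<Rightarrow> real)
    \<Rightarrow> real ^ 'n \<Rightarrow> nat \<Rightarrow> real" where
  "loss \<eta> \<gamma> X a z0 t =
     (\<Sum>i\<in>UNIV. real CARD('n) * (traj a z0 t i)^2 / (2 * \<eta>^2 * \<gamma>^2 * norm (X i)^4))"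

definition init_box :: "('n::finite \<Rightarrow> real) \<Rightarrow> (real ^ 'n) set" where
  "init_box a = {z. \<forall>i. - a i \<le> z $ i \<and> z $ i \<le> 2}"

end

theory Submission
  imports Defs "HOL-Computational_Algebra.Polynomial"
begin

lemma fmap_plus: "fmap a z + a = (z+a)*(z-1)^2"
  unfolding fmap_def by (simp add: power2_eq_square algebra_simps)
lemma fmap_minus2: "fmap a z - 2 = (z-2)*(z^2+a*z+1)"
  unfolding fmap_def by (simp add: power2_eq_square algebra_simps)
lemma fmap_sub: "fmap a z - z = z*(z+a)*(z-2)"
  unfolding fmap_def by (simp add: power2_eq_square algebra_simps)
lemma fmap_alt: "fmap a z = z*(1 - (z+a)*(2-z))"
  unfolding fmap_def by (simp add: power2_eq_square algebra_simps)

lemma fmap_cont: "continuous_on S (fmap a)"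
  unfolding fmap_def by (intro continuous_intros)

lemma fmap_deriv: "(fmap a has_real_derivative (z-1)*(3*z+2*a-1)) (at z within S)"
  unfolding fmap_def
  by (rule derivative_eq_intros refl | simp add: power2_eq_square algebra_simps)+

lemma fmap_ge: assumes "-a \<le> z" shows "-a \<le> fmap a z"
proof -
  have "0 \<le> (z+a)*(z-1)^2" using assms by simp
  thus ?thesis using fmap_plus[of a z] by linarith
qed

lemma fmap_le2: assumes "0 < a" "a \<le> 2" "z \<le> 2" shows "fmap a z \<le> 2"
proof -
  have "z^2+a*z+1 = (z+a/2)^2 + (1 - a^2/4)" by (simp add: power2_eq_square algebra_simps)
  moreover have "a^2 \<le> 4" using power_mono[of a 2 2] assms by simp
  ultimately have "z^2+a*z+1 \<ge> 0" using zero_le_power2[of "z+a/2"] by linarith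
  hence "(z-2)*(z^2+a*z+1) \<le> 0" using assms by (simp add: mult_nonpos_nonneg)
  thus ?thesis using fmap_minus2[of a z] by linarith
qed

lemma iter_Suc: "(fmap a ^^ Suc t) x = fmap a ((fmap a ^^ t) x)" by simp

lemma inv_iter: assumes "0 < a" "a \<le> 2" "-a \<le> x" "x \<le> 2"
  shows "-a \<le> (fmap a ^^ t) x \<and> (fmap a ^^ t) x \<le> 2"
  by (induction t) (use assms fmap_ge fmap_le2 in auto)

lemma decr_step: assumes "0 < a" "a \<le> 2 * sqrt 2 - 2" "-a \<le> z" "z \<le> 2"
  shows "\<bar>fmap a z\<bar> \<le> \<bar>z\<bar>"
proof -
  define p where "p = (z+a)*(2-z)"
  have p0: "p \<ge> 0" unfolding p_def using assms by simp
  have "(a+2)^2 \<le> (2 * sqrt 2)^2" using assms by (intro power_mono) auto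
  hence h: "4 - 4*a - a^2 \<ge> 0" by (simp add: power2_eq_square algebra_simps)
  have "2 - p = (z-(2-a)/2)^2 + (4-4*a-a^2)/4" unfolding p_def by (simp add: power2_eq_square field_simps)
  moreover have "(4-4*a-a^2)/4 \<ge> 0" using h by simp
  ultimately have p2: "p \<le> 2" using zero_le_power2[of "z-(2-a)/2"] by linarith
  have "\<bar>1-p\<bar> \<le> 1" using p0 p2 by auto
  hence "\<bar>z\<bar>*\<bar>1-p\<bar> \<le> \<bar>z\<bar>" by (simp add: mult_left_le)
  thus ?thesis by (simp add: fmap_alt p_def[symmetric] abs_mult)
qed

definition V :: "real \<Rightarrow> real" where "V z = \<bar>z\<bar> + (max z 0)^2"

lemma V_cont: "continuous_on S V" unfolding V_def by (intro continuous_intros)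
lemma V_ge: "\<bar>z\<bar> \<le> V z" unfolding V_def by simp

lemma C1: assumes "0 < a" "a \<le> 1" "-a < z" "z < 1"
  shows "-a < fmap a z \<and> fmap a z < 1"
proof
  have "0 < (z+a)*(z-1)^2" using assms by simp
  thus "-a < fmap a z" using fmap_plus[of a z] by linarith
next
  define p where "p = (z+a)*(2-z)"
  have f: "fmap a z = z*(1-p)" by (simp add: fmap_alt p_def)
  show "fmap a z < 1"
  proof (cases "z \<le> 0")
    case True
    have "p \<le> 2*a"
    proof -
      have "p - 2*a = z*(2-a-z)" unfolding p_def by (simp add: algebra_simps)
      moreover have "z*(2-a-z) \<le> 0" using True assms by (intro mult_nonpos_nonneg) auto
      ultimately show ?thesis by simp
    qed
    moreover have "p \<ge> 0" unfolding p_def using assms by simp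
    ultimately have "\<bar>1-p\<bar> \<le> 1" using assms by auto
    hence "\<bar>z\<bar>*\<bar>1-p\<bar> \<le> \<bar>z\<bar>" by (simp add: mult_left_le)
    hence "\<bar>fmap a z\<bar> \<le> \<bar>z\<bar>" by (simp add: f abs_mult)
    thus ?thesis using assms by linarith
  next
    case False
    have "p > 0" unfolding p_def using assms False by simp
    hence "z*(1-p) < z" using False by (simp add: mult_less_cancel_left1) 
    thus ?thesis using f assms by linarith
  qed
qed

lemma C2: assumes "0 < a" "a \<le> 1" "-a < z" "z < 1" "z \<noteq> 0"
  shows "V (fmap a z) < V z"
proof -
  define p where "p = (z+a)*(2-z)"
  have f: "fmap a z = z*(1-p)" by (simp add: fmap_alt p_def)
  have pp: "p > 0" unfolding p_def using assms by simp
  show ?thesis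
  proof (cases "z < 0")
    case zneg: True
    define s where "s = -z"
    have s0: "s > 0" using zneg s_def by simp
    show ?thesis
    proof (cases "fmap a z \<le> 0")
      case True
      have "1 - p \<ge> 0" using True zneg f by (simp add: mult_le_0_iff)
      have "V (fmap a z) = s*(1-p)" using True f s_def by (simp add: V_def)
      also have "\<dots> < s" using pp s0 by simp
      also have "s = V z" using zneg s_def by (simp add: V_def)
      finally show ?thesis .
    next
      case False
      define q where "q = p - 1"
      have fq: "fmap a z = s*q" unfolding f s_def q_def by (simp add: algebra_simps)
      have q0: "q > 0" using False fq s0 by (smt (verit) mult_nonneg_nonpos)
      define m where "m = 1 - s - s^2"
      have "p \<le> (1-s)*(2+s)"
      proof -
        have "z + a \<le> 1 - s" using assms s_def by simp
        moreover have "0 \<le> z+a" using assms by simp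
        moreover have "2 - z = 2 + s" using s_def by simp
        moreover have "(z+a)*(2+s) \<le> (1-s)*(2+s)" using \<open>z + a \<le> 1 - s\<close> s0 by (intro mult_right_mono) auto
        ultimately show ?thesis unfolding p_def by (metis diff_minus_eq_add)
      qed
      hence qm: "q \<le> m" unfolding q_def m_def by (simp add: power2_eq_square algebra_simps)
      hence m0: "m > 0" using q0 by simp
      have m1: "m < 1" using s0 zero_le_power2[of s] unfolding m_def by linarith
      have "V (fmap a z) = s*q + (s*q)^2" using fq q0 s0 by (simp add: V_def)
      also have "\<dots> \<le> s*m + (s*m)^2"
        using qm q0 s0 by (intro add_mono mult_left_mono power_mono) auto
      also have "\<dots> < s"
      proof -
        have "m^2 < 1" using m0 m1 by (simp add: power_less_one_iff abs_square_less_1)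
        hence "s*m^2 < s*1" using s0 by (intro mult_strict_left_mono) auto
        hence "s*m^2 < s + s^2" using zero_le_power2[of s] by linarith
        hence "s*(s*m^2) < s*(s+s^2)" using s0 by simp
        thus ?thesis unfolding m_def by (simp add: power2_eq_square algebra_simps)
      qed
      also have "s = V z" using zneg s_def by (simp add: V_def)
      finally show ?thesis .
    qed
  next
    case False
    hence zpos: "z > 0" using assms by simp
    show ?thesis
    proof (cases "fmap a z \<ge> 0")
      case True
      have lt: "fmap a z < z" using f pp zpos by (simp add: mult_less_cancel_left1)
      have "V (fmap a z) = fmap a z + (fmap a z)^2" using True by (simp add: V_def)
      also have "\<dots> < z + z^2" using lt True by (intro add_strict_mono power_strict_mono) auto
      also have "\<dots> = V z" using zpos by (simp add: V_def)
      finally show ?thesis .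
    next
      case False
      have "p \<le> (z+1)*(2-z)" unfolding p_def using assms by (intro mult_right_mono) auto
      moreover have "(z+1)*(2-z) = 2 + z - z*z" by (simp add: algebra_simps)
      moreover have "z*z > 0" using zpos by simp
      ultimately have "p - 1 < 1 + z" by linarith
      hence "z*(p-1) < z*(1+z)" using zpos by simp
      moreover have "V (fmap a z) = z*(p-1)" using False f by (simp add: V_def algebra_simps)
      moreover have "V z = z*(1+z)" using zpos by (simp add: V_def power2_eq_square algebra_simps)
      ultimately show ?thesis by simp
    qed
  qed
qed

lemma V_isCont: "isCont V c"
  using V_cont[of UNIV] continuous_on_eq_continuous_at[of UNIV V] by auto
lemma fmap_isCont: "isCont (fmap a) c"
  using fmap_cont[of UNIV a] continuous_on_eq_continuous_at[of UNIV "fmap a"] by auto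
lemma V0: "V 0 = 0" by (simp add: V_def)
lemma fmap0: "fmap a 0 = 0" by (simp add: fmap_def)
lemma fmap1: "fmap a 1 = -a" by (simp add: fmap_def)

lemma C3: assumes a: "0 < a" "a \<le> 1" and x: "-a < x" "x < 1"
  shows "(\<lambda>t. (fmap a ^^ t) x) \<longlonglongrightarrow> 0"
proof -
  define u where "u t = (fmap a ^^ t) x" for t
  have uS: "u (Suc t) = fmap a (u t)" for t by (simp add: u_def)
  have uin: "-a < u t \<and> u t < 1" for t
  proof (induction t)
    case 0 then show ?case using x by (simp add: u_def)
  next
    case (Suc t) then show ?case using C1[OF a] uS by auto
  qed
  define v where "v t = V (u t)" for t
  have vle: "v (Suc t) \<le> v t" for t
  proof (cases "u t = 0")
    case True then show ?thesis by (simp add: v_def uS fmap0)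
  next
    case False then show ?thesis using C2[OF a] uin[of t] by (simp add: v_def uS less_imp_le)
  qed
  have dec: "decseq v" using vle by (simp add: decseq_SucI)
  have v0: "\<forall>i. 0 \<le> v i" using V_ge by (metis abs_ge_zero order_trans v_def)
  obtain L where L: "v \<longlonglongrightarrow> L" "\<forall>i. L \<le> v i" using decseq_convergent[OF dec v0] by blast
  have L0: "0 \<le> L" using L(1) v0 by (intro LIMSEQ_le_const) auto
  show ?thesis
  proof (cases "L = 0")
    case True
    have "u \<longlonglongrightarrow> 0"
      by (rule Lim_null_comparison[of _ v]) (use L(1) True V_ge v_def in auto)
    moreover have "u = (\<lambda>t. (fmap a ^^ t) x)" by (rule ext) (simp add: u_def)
    ultimately show ?thesis by simp
  next
    case False
    hence Lp: "L > 0" using L0 by simp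
    have sc: "seq_compact {-a..1}" by (intro compact_imp_seq_compact compact_Icc)
    obtain c r where c: "c \<in> {-a..1}" and r: "strict_mono r" and cr: "(u \<circ> r) \<longlonglongrightarrow> c"
      using seq_compactE[OF sc, of u] uin by (metis atLeastAtMost_iff less_imp_le)
    have cr': "(\<lambda>k. u (r k)) \<longlonglongrightarrow> c" using cr by (simp add: comp_def)
    have "(\<lambda>k. V (u (r k))) \<longlonglongrightarrow> V c" by (rule isCont_tendsto_compose[OF V_isCont cr'])
    moreover have "(\<lambda>k. V (u (r k))) \<longlonglongrightarrow> L" using LIMSEQ_subseq_LIMSEQ[OF L(1) r] by (simp add: comp_def v_def)
    ultimately have Vc: "V c = L" using LIMSEQ_unique by blast
    have "(\<lambda>k. fmap a (u (r k))) \<longlonglongrightarrow> fmap a c" by (rule isCont_tendsto_compose[OF fmap_isCont cr'])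
    hence "(\<lambda>k. V (fmap a (u (r k)))) \<longlonglongrightarrow> V (fmap a c)" by (rule isCont_tendsto_compose[OF V_isCont])
    moreover have "(\<lambda>k. V (fmap a (u (r k)))) \<longlonglongrightarrow> L"
      using LIMSEQ_subseq_LIMSEQ[OF LIMSEQ_Suc[OF L(1)] r] by (simp add: comp_def v_def uS)
    ultimately have Vfc: "V (fmap a c) = L" using LIMSEQ_unique by blast
    show ?thesis
    proof (cases "c = -a")
      case True
      have "eventually (\<lambda>k. u (r k) < 0) sequentially"
        using order_tendstoD(2)[OF cr', of 0] True a by simp
      then obtain k where k: "u (r k) < 0" by (meson eventually_sequentially order_refl)
      have "v (r k) < a" using k uin[of "r k"] by (simp add: v_def V_def)
      moreover have "V (-a) = a" using a by (simp add: V_def)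
      moreover have "L \<le> v (r k)" using L(2) by blast
      ultimately have False using Vc True by simp
      thus ?thesis ..
    next
      case cna: False
      show ?thesis
      proof (cases "c = 1")
        case True
        have "V (-a) = a" using a by (simp add: V_def)
        moreover have "V 1 = 2" by (simp add: V_def)
        ultimately show ?thesis using Vc Vfc True fmap1[of a] a by simp
      next
        case False
        have "c \<noteq> 0" using Vc Lp V0 by auto
        hence "V (fmap a c) < V c" using C2[OF a] c cna False by auto
        thus ?thesis using Vc Vfc by simp
      qed
    qed
  qed
qed

lemma iter_add: "(fmap a ^^ (k + t)) x = (fmap a ^^ k) ((fmap a ^^ t) x)"
  by (simp add: funpow_add)

lemma C4: assumes a: "0 < a" "a \<le> 1" and x: "-a \<le> x" "x \<le> 2"
    and av: "\<forall>t. (fmap a ^^ t) x \<notin> {-a, 1, 2}"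
  shows "(\<lambda>t. (fmap a ^^ t) x) \<longlonglongrightarrow> 0"
proof -
  define u where "u t = (fmap a ^^ t) x" for t
  have uS: "u (Suc t) = fmap a (u t)" for t by (simp add: u_def)
  have ui: "-a \<le> u t \<and> u t \<le> 2" for t using inv_iter[of a x t] a x by (simp add: u_def)
  have un: "u t \<noteq> -a \<and> u t \<noteq> 1 \<and> u t \<noteq> 2" for t using av by (auto simp: u_def)
  have "\<exists>t. u t < 1"
  proof (rule ccontr)
    assume "\<not> (\<exists>t. u t < 1)"
    hence ge0: "\<not> u t < 1" for t by blast
    have ge: "u t > 1" for t using ge0[of t] un[of t] by linarith
    have x12: "1 < x" "x < 2" using ge[of 0] ui[of 0] un[of 0] by (auto simp: u_def)
    define d where "d = (1+a)*(2-x)"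
    have d0: "d > 0" using a x12 by (simp add: d_def)
    have bound: "u t \<le> x - real t * d" for t
    proof (induction t)
      case 0 thus ?case by (simp add: u_def)
    next
      case (Suc t)
      have "real t * d \<ge> 0" using d0 by simp
      hence ut: "u t \<le> x" using Suc.IH by linarith
      have g: "u t > 1" by (rule ge)
      have A: "u t * (u t + a) \<ge> 1 + a" using mult_mono[of 1 "u t" "1+a" "u t + a"] g a by simp
      have "u t * (u t + a) * (u t - 2) \<le> u t * (u t + a) * (x - 2)"
        using ut g a by (intro mult_left_mono) auto
      also have "\<dots> \<le> (1 + a) * (x - 2)" using A x12 by (intro mult_right_mono_neg) auto
      finally have "u (Suc t) - u t \<le> -d" using fmap_sub[of a "u t"] uS[of t] by (simp add: d_def algebra_simps)
      thus ?case using Suc by (simp add: algebra_simps)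
    qed
    obtain n where "x < real n * d" using reals_Archimedean3[OF d0] by blast
    hence "u n < 1" using bound[of n] by linarith
    thus False using ge[of n] by simp
  qed
  then obtain t where t: "u t < 1" by blast
  have t2: "-a < u t" using ui[of t] un[of t] by auto
  have "(\<lambda>k. (fmap a ^^ k) (u t)) \<longlonglongrightarrow> 0" by (rule C3[OF a t2 t])
  hence "(\<lambda>k. u (k + t)) \<longlonglongrightarrow> 0" by (simp add: u_def iter_add)
  hence "u \<longlonglongrightarrow> 0" by (rule LIMSEQ_offset)
  moreover have "u = (\<lambda>t. (fmap a ^^ t) x)" by (rule ext) (simp add: u_def)
  ultimately show ?thesis by simp
qed

lemma D: assumes a: "1 < a" "a \<le> 2" and lim: "(\<lambda>t. (fmap a ^^ t) x) \<longlonglongrightarrow> 0"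
  shows "\<exists>t. (fmap a ^^ t) x = 0"
proof (rule ccontr)
  assume nz: "\<not> ?thesis"
  define u where "u t = (fmap a ^^ t) x" for t
  have uS: "u (Suc t) = fmap a (u t)" for t by (simp add: u_def)
  have un: "u t \<noteq> 0" for t using nz by (auto simp: u_def)
  define d where "d = min 1 ((a-1)/2)"
  have d0: "d > 0" using a by (simp add: d_def)
  have step: "\<bar>fmap a z\<bar> > \<bar>z\<bar>" if "\<bar>z\<bar> < d" "z \<noteq> 0" for z
  proof -
    define p where "p = (z+a)*(2-z)"
    have e: "p - 2 = 2*a - 2 + (2-a)*z - z*z" by (simp add: p_def algebra_simps)
    have z1: "\<bar>z\<bar> < 1" "\<bar>z\<bar> < (a-1)/2" using that by (auto simp: d_def)
    have "\<bar>(2-a)*z\<bar> \<le> \<bar>z\<bar>" using a by (simp add: abs_mult mult_left_le_one_le)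
    moreover have "z*z \<le> \<bar>z\<bar>" using z1 by (metis abs_ge_zero abs_mult_self_eq less_imp_le mult_left_le_one_le)
    moreover have "-\<bar>(2-a)*z\<bar> \<le> (2-a)*z" by simp
    ultimately have "p - 2 \<ge> 2*a - 2 - 2*\<bar>z\<bar>" using e by linarith
    moreover have "2*\<bar>z\<bar> < a - 1" using z1(2) by (simp add: field_simps)
    ultimately have "p - 2 > 0" using a(1) by linarith
    hence "\<bar>1 - p\<bar> > 1" by simp
    hence "\<bar>z\<bar> * 1 < \<bar>z\<bar> * \<bar>1-p\<bar>" using that by (intro mult_strict_left_mono) auto
    thus ?thesis by (simp add: fmap_alt p_def[symmetric] abs_mult)
  qed
  have lim': "u \<longlonglongrightarrow> 0" using lim by (simp add: u_def[abs_def])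
  obtain N where N: "\<forall>n\<ge>N. \<bar>u n\<bar> < d" using LIMSEQ_D[OF lim' d0] by auto
  have grow: "\<bar>u (N + k)\<bar> \<ge> \<bar>u N\<bar>" for k
  proof (induction k)
    case 0 thus ?case by simp
  next
    case (Suc k)
    have "\<bar>u (Suc (N + k))\<bar> > \<bar>u (N+k)\<bar>" using step[of "u (N+k)"] N un uS by auto
    thus ?case using Suc by simp
  qed
  have pos: "\<bar>u N\<bar> > 0" using un by simp
  obtain M where M: "\<forall>n\<ge>M. \<bar>u n\<bar> < \<bar>u N\<bar>" using LIMSEQ_D[OF lim' pos] by auto
  have "\<bar>u (N + M)\<bar> < \<bar>u N\<bar>" using M by simp
  thus False using grow[of M] by simp
qed

lemma E_escape: assumes a: "2 < a" and x: "-a \<le> x" and ex: "\<exists>t. (fmap a ^^ t) x \<notin> {-a..2}"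
  shows "filterlim (\<lambda>t. (fmap a ^^ t) x) at_top sequentially"
proof -
  define u where "u t = (fmap a ^^ t) x" for t
  have uS: "u (Suc t) = fmap a (u t)" for t by (simp add: u_def)
  have ui: "-a \<le> u t" for t by (induction t) (use x fmap_ge uS in \<open>auto simp: u_def\<close>)
  obtain t where "(fmap a ^^ t) x \<notin> {-a..2}" using ex by blast
  hence t: "u t > 2" using ui[of t] by (auto simp: u_def)
  define c where "c = u t - 2"
  have c0: "c > 0" using t c_def by simp
  have lin: "u (t + k) \<ge> u t + real k * c" for k
  proof (induction k)
    case 0 thus ?case by simp
  next
    case (Suc k)
    define z where "z = u (t+k)"
    have "real k * c \<ge> 0" using c0 by simp
    hence z2: "z \<ge> u t" using Suc.IH z_def by linarith
    have "2 * 2 \<le> z * (z+a)" using mult_mono[of 2 z 2 "z+a"] z2 t a by simp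
    hence "z * (z+a) \<ge> 1" by simp
    hence "z * (z+a) * (z-2) \<ge> 1 * (z-2)" using z2 t by (intro mult_right_mono) auto
    hence "fmap a z - z \<ge> c" using fmap_sub[of a z] z2 c_def by simp
    thus ?case using Suc uS[of "t+k"] z_def by (simp add: algebra_simps)
  qed
  have "filterlim u at_top sequentially"
    unfolding filterlim_at_top eventually_sequentially
  proof
    fix Z :: real
    obtain n0 where n0: "Z - u t < real n0 * c" using reals_Archimedean3[OF c0] by blast
    show "\<exists>N. \<forall>n\<ge>N. Z \<le> u n"
    proof (intro exI allI impI)
      fix n assume "t + n0 \<le> n"
      define k where "k = n - t"
      have k: "n = t + k" "k \<ge> n0" using \<open>t + n0 \<le> n\<close> by (auto simp: k_def)
      have "real n0 * c \<le> real k * c" using k c0 by (intro mult_right_mono) auto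
      thus "Z \<le> u n" using lin[of k] k n0 by simp
    qed
  qed
  thus ?thesis by (simp add: u_def[abs_def])
qed

lemma fin_pre1: "finite {z. fmap a z = c}"
proof -
  have "{z. fmap a z = c} = {z. poly [:-c, 1-2*a, a-2, 1:] z = 0}"
    by (auto simp: fmap_def power2_eq_square algebra_simps)
  moreover have "[:-c, 1-2*a, a-2, 1:] \<noteq> 0" by simp
  ultimately show ?thesis using poly_roots_finite by metis
qed

lemma fin_pre: "finite S \<Longrightarrow> finite (fmap a -` S)"
proof -
  assume "finite S"
  moreover have "fmap a -` S = (\<Union>c\<in>S. {z. fmap a z = c})" by auto
  ultimately show ?thesis using fin_pre1 by auto
qed

lemma fin_pre_iter: assumes "finite S" shows "finite ((fmap a ^^ t) -` S)"
proof (induction t)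
  case 0 thus ?case using assms by simp
next
  case (Suc t)
  have eq: "(fmap a ^^ Suc t) -` S = fmap a -` ((fmap a ^^ t) -` S)"
    by (simp only: funpow_Suc_right vimage_comp)
  show ?case unfolding eq by (rule fin_pre[OF Suc.IH])
qed

lemma count_orbit: assumes "finite S" shows "countable {x. \<exists>t. (fmap a ^^ t) x \<in> S}"
proof -
  have "{x. \<exists>t. (fmap a ^^ t) x \<in> S} = (\<Union>t. (fmap a ^^ t) -` S)" by auto
  thus ?thesis using fin_pre_iter[OF assms] by (simp add: countable_finite)
qed

lemma coord_null:
  fixes N :: "real set" and b0 :: "'a::euclidean_space"
  assumes N: "N \<in> null_sets lborel" and b0: "b0 \<in> Basis"
  shows "{x::'a. x \<bullet> b0 \<in> N} \<in> null_sets lborel"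
proof -
  have Nb: "N \<in> sets borel" using null_setsD2[OF N] by simp
  define g where "g b = (if b = b0 then indicator N else (\<lambda>_. 1::ennreal))" for b :: 'a
  have gm: "g b \<in> borel_measurable borel" for b using Nb by (simp add: g_def)
  have ind: "indicator {x::'a. x \<bullet> b0 \<in> N} x = (\<Prod>b\<in>Basis. g b (x \<bullet> b))" for x
  proof -
    have "(\<Prod>b\<in>Basis. g b (x \<bullet> b)) = (\<Prod>b\<in>Basis. if b = b0 then indicator N (x \<bullet> b) else 1)"
      by (intro prod.cong) (auto simp: g_def)
    also have "\<dots> = indicator N (x \<bullet> b0)" using b0 by (simp add: prod.delta)
    finally show ?thesis by (simp add: indicator_def)
  qed
  have meas: "(\<lambda>x::'a. x \<bullet> b0) \<in> borel_measurable borel" by simp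
  have S: "{x::'a. x \<bullet> b0 \<in> N} \<in> sets borel"
    using measurable_sets[OF meas Nb] by (simp add: vimage_def)
  have "emeasure lborel {x::'a. x \<bullet> b0 \<in> N} = (\<integral>\<^sup>+x. indicator {x::'a. x \<bullet> b0 \<in> N} x \<partial>lborel)"
    using S by simp
  also have "\<dots> = (\<integral>\<^sup>+x. (\<Prod>b\<in>Basis. g b (x \<bullet> b)) \<partial>lborel)" by (simp add: ind)
  also have "\<dots> = (\<Prod>b\<in>Basis. (\<integral>\<^sup>+x. g b x \<partial>lborel))"
    by (rule nn_integral_lborel_prod) (use gm in auto)
  also have "\<dots> = 0"
  proof -
    have "(\<integral>\<^sup>+x. g b0 x \<partial>lborel) = emeasure lborel N" using Nb by (simp add: g_def)
    also have "\<dots> = 0" using null_setsD1[OF N] by simp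
    finally show ?thesis using b0 by (intro prod_zero) auto
  qed
  finally show ?thesis using S by (simp add: null_sets_def)
qed

lemma coord_null_vec:
  fixes N :: "real set" and i :: "'n::finite"
  assumes N: "N \<in> null_sets lborel"
  shows "{x::real^'n. x $ i \<in> N} \<in> null_sets lborel"
proof -
  have "{x::real^'n. x $ i \<in> N} = {x. x \<bullet> axis i 1 \<in> N}" by (simp add: cart_eq_inner_axis)
  moreover have ax: "axis i (1::real) \<in> (Basis :: (real^'n) set)" by simp
  ultimately show ?thesis using coord_null[OF N ax] by simp
qed

lemma meas_cmp:
  fixes g h :: "real \<Rightarrow> real"
  assumes S: "S \<in> sets lebesgue"
   and dg: "\<And>x. x\<in>S \<Longrightarrow> (g has_real_derivative g' x) (at x)"
   and dh: "\<And>x. x\<in>S \<Longrightarrow> (h has_real_derivative h' x) (at x)"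
   and ig: "inj_on g S" and ih: "inj_on h S"
   and bg: "bounded (g ` S)" and bh: "bounded (h ` S)"
   and le: "\<And>x. x\<in>S \<Longrightarrow> \<bar>g' x\<bar> \<le> c * \<bar>h' x\<bar>"
  shows "measure lebesgue (g ` S) \<le> c * measure lebesgue (h ` S)"
proof -
  have key: "(\<lambda>x. \<bar>k' x\<bar> * 1) integrable_on S \<and> integral S (\<lambda>x. \<bar>k' x\<bar> * 1) = measure lebesgue (k ` S)"
    if dk: "\<And>x. x\<in>S \<Longrightarrow> (k has_real_derivative k' x) (at x)" and ik: "inj_on k S"
      and bk: "bounded (k ` S)" for k k' :: "real \<Rightarrow> real"
  proof -
    have dkw: "\<And>x. x\<in>S \<Longrightarrow> (k has_real_derivative k' x) (at x within S)"
      using dk by (simp add: has_field_derivative_at_within)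
    have "k differentiable_on S"
      unfolding differentiable_on_def
    proof
      fix x assume "x \<in> S"
      hence "k field_differentiable (at x within S)" using dkw field_differentiable_def by blast
      thus "k differentiable (at x within S)" by (rule field_differentiable_imp_differentiable)
    qed
    hence "k ` S \<in> sets lebesgue" by (intro differentiable_image_in_sets_lebesgue[OF S]) auto
    hence lm: "k ` S \<in> lmeasurable" using bk by (intro bounded_set_imp_lmeasurable)
    have A: "(\<lambda>_. 1::real) absolutely_integrable_on (k ` S)"
      using integrable_on_const[OF lm] absolutely_integrable_on_iff_nonneg[of "k ` S" "\<lambda>_. 1::real"] by simp
    have B: "integral (k ` S) (\<lambda>_. 1::real) = measure lebesgue (k ` S)"
      using lmeasure_integral[OF lm] by simp
    note iff = has_absolute_integral_change_of_variables_1'[OF S dkw ik, of "\<lambda>_. 1" "measure lebesgue (k ` S)"]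
    have C: "(\<lambda>x. \<bar>k' x\<bar> * 1) absolutely_integrable_on S \<and> integral S (\<lambda>x. \<bar>k' x\<bar> * 1) = measure lebesgue (k ` S)"
      using iffD2[OF iff] A B by simp
    have "(\<lambda>x. \<bar>k' x\<bar> * 1) integrable_on S"
      using C absolutely_integrable_on_iff_nonneg[of S "\<lambda>x. \<bar>k' x\<bar> * 1"] by simp
    thus ?thesis using C by simp
  qed
  note G = key[OF dg ig bg] and H = key[OF dh ih bh]
  have Gi: "(\<lambda>x. \<bar>g' x\<bar> * 1) integrable_on S" using G by simp
  have Hi0: "(\<lambda>x. \<bar>h' x\<bar> * 1) integrable_on S" using H by simp
  have Hi: "(\<lambda>x. c * (\<bar>h' x\<bar> * 1)) integrable_on S"
    using integrable_on_cmult_left[OF Hi0, of c] by simp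
  have "measure lebesgue (g ` S) = integral S (\<lambda>x. \<bar>g' x\<bar> * 1)" using G by simp
  also have "\<dots> \<le> integral S (\<lambda>x. c * (\<bar>h' x\<bar> * 1))"
    by (rule integral_le[OF Gi Hi]) (use le in simp)
  also have "\<dots> = c * integral S (\<lambda>x. \<bar>h' x\<bar> * 1)" by (simp add: integral_mult)
  also have "\<dots> = c * measure lebesgue (h ` S)" using H by simp
  finally show ?thesis .
qed

lemma inj_deriv_pos:
  fixes F :: "real \<Rightarrow> real"
  assumes d: "\<And>x. x \<in> {l<..<u} \<Longrightarrow> (F has_real_derivative F' x) (at x)"
    and p: "\<And>x. x \<in> {l<..<u} \<Longrightarrow> F' x > 0"
  shows "inj_on F {l<..<u}"
proof -
  have lt: "F x < F y" if xy: "x \<in> {l<..<u}" "y \<in> {l<..<u}" "x < y" for x y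
  proof (rule DERIV_pos_imp_increasing[OF \<open>x<y\<close>])
    fix z assume "x \<le> z" "z \<le> y"
    hence z: "z \<in> {l<..<u}" using xy by auto
    show "\<exists>y. DERIV F z :> y \<and> y > 0" using d[OF z] p[OF z] by blast
  qed
  show ?thesis unfolding inj_on_def
  proof (intro ballI impI)
    fix x y assume xy: "x \<in> {l<..<u}" "y \<in> {l<..<u}" "F x = F y"
    show "x = y"
    proof (rule linorder_cases[of x y])
      assume "x < y" thus ?thesis using lt[of x y] xy by simp
    next
      assume "y < x" thus ?thesis using lt[of y x] xy by simp
    qed
  qed
qed

definition phi :: "real \<Rightarrow> real \<Rightarrow> real" where "phi a x = arcsin ((2*x + a - 2)/(a+2))"
definition Dd :: "real \<Rightarrow> real \<Rightarrow> real" where "Dd a x = (2-x)*(x+a)"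

lemma w_bounds: fixes a x :: real assumes "0 < a" "-a \<le> x" "x \<le> 2"
  shows "-1 \<le> (2*x + a - 2)/(a+2) \<and> (2*x + a - 2)/(a+2) \<le> 1"
  using assms by (simp add: divide_le_eq le_divide_eq)

lemma w_bounds_strict: fixes a x :: real assumes "0 < a" "-a < x" "x < 2"
  shows "-1 < (2*x + a - 2)/(a+2) \<and> (2*x + a - 2)/(a+2) < 1"
  using assms by (simp add: divide_less_eq less_divide_eq)

lemma phi_bounded: assumes "0 < a" "A \<subseteq> {-a..2}" shows "bounded (phi a ` A)"
proof -
  have "phi a ` A \<subseteq> {-(pi/2)..pi/2}"
    using assms w_bounds[OF assms(1)] arcsin_bounded by (force simp: phi_def)
  thus ?thesis by (rule bounded_subset[OF bounded_closed_interval])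
qed

lemma phi_less: assumes "0 < a" "-a \<le> x" "x < y" "y \<le> 2" shows "phi a x < phi a y"
proof -
  have "(2*x + a - 2)/(a+2) < (2*y + a - 2)/(a+2)" using assms by (simp add: divide_strict_right_mono)
  thus ?thesis unfolding phi_def
    using w_bounds[OF assms(1) assms(2)] w_bounds[OF assms(1) _ assms(4)] assms
    by (intro arcsin_less_arcsin) auto
qed

lemma phi_inj: assumes "0 < a" shows "inj_on (phi a) {-a..2}"
  unfolding inj_on_def
proof (intro ballI impI)
  fix x y assume xy: "x \<in> {-a..2}" "y \<in> {-a..2}" "phi a x = phi a y"
  show "x = y"
  proof (rule linorder_cases[of x y])
    assume "x < y" thus ?thesis using phi_less[OF assms, of x y] xy by simp
  next
    assume "y < x" thus ?thesis using phi_less[OF assms, of y x] xy by simp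
  qed
qed

lemma phi_deriv: assumes a: "0 < a" and x: "-a < x" "x < 2"
  shows "(phi a has_real_derivative 1 / sqrt (Dd a x)) (at x)"
proof -
  define w where "w = (2*x + a - 2)/(a+2)"
  have wb: "-1 < w" "w < 1" using w_bounds_strict[OF a x] by (auto simp: w_def)
  have dw: "((\<lambda>x. (2*x + a - 2)/(a+2)) has_real_derivative 2/(a+2)) (at x)"
  proof -
    have "((\<lambda>x. 2*x + a - 2) has_real_derivative 2) (at x)"
      by (rule derivative_eq_intros refl | simp)+
    thus ?thesis by (rule DERIV_cdivide)
  qed
  have ch: "((\<lambda>x. arcsin ((2*x + a - 2)/(a+2))) has_real_derivative inverse (sqrt (1 - w^2)) * (2/(a+2))) (at x)"
    using DERIV_chain2[OF DERIV_arcsin[OF wb[unfolded w_def]] dw] by (simp add: w_def)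
  have D0: "Dd a x > 0" using x by (simp add: Dd_def)
  have wa: "w * (a+2) = 2*x + a - 2" using a by (simp add: w_def)
  have "(1 - w^2) * (a+2)^2 = (a+2)^2 - (w*(a+2))^2" by (simp add: power2_eq_square algebra_simps)
  also have "\<dots> = 4 * Dd a x" unfolding wa Dd_def by (simp add: power2_eq_square algebra_simps)
  finally have e0: "(1 - w^2) * (a+2)^2 = 4 * Dd a x" .
  have e1: "1 - w^2 = (4 * Dd a x) / (a+2)^2"
    using e0 a by (simp add: eq_divide_eq)
  have "sqrt (1 - w^2) = 2 * sqrt (Dd a x) / (a+2)"
  proof -
    have "sqrt (1 - w^2) = sqrt 4 * sqrt (Dd a x) / sqrt ((a+2)^2)"
      by (simp add: e1 real_sqrt_divide real_sqrt_mult)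
    moreover have "sqrt 4 = (2::real)" by (metis real_sqrt_abs abs_numeral power2_eq_square numeral_times_numeral semiring_norm(12) semiring_norm(13))
    moreover have "sqrt ((a+2)^2) = a + 2" using a by simp
    ultimately show ?thesis by simp
  qed
  hence "inverse (sqrt (1 - w^2)) * (2/(a+2)) = 1 / sqrt (Dd a x)"
    using a D0 by (simp add: field_simps)
  thus ?thesis using ch by (simp add: phi_def[abs_def])
qed

definition kap :: "real \<Rightarrow> real" where "kap a = sqrt (9 + (a-2)*(a+4)/(2*a+5))"

lemma kap_gt3: assumes "2 < a" shows "kap a > 3"
proof -
  have "(a-2)*(a+4)/(2*a+5) > 0" using assms by simp
  hence "sqrt 9 < kap a" unfolding kap_def by (intro real_sqrt_less_mono) simp
  moreover have "sqrt 9 = (3::real)"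
  proof -
    have "(9::real) = 3^2" by simp
    thus ?thesis by simp
  qed
  ultimately show ?thesis by simp
qed

lemma Dd_f: "Dd a (fmap a x) = Dd a x * (x-1)^2 * (x^2 + a*x + 1)"
proof -
  define Q where "Q = x^2 + a*x + 1"
  have h1: "fmap a x - 2 = (x-2)*Q" using fmap_minus2[of a x] by (simp add: Q_def)
  have h2: "(2-x)*Q = -((x-2)*Q)" by (simp add: algebra_simps)
  have h3: "2 - fmap a x = (2-x)*Q" using h1 h2 by linarith
  have h4: "fmap a x + a = (x+a)*(x-1)^2" by (rule fmap_plus)
  have "Dd a (fmap a x) = ((2-x)*Q) * ((x+a)*(x-1)^2)" unfolding Dd_def h3 h4 ..
  also have "\<dots> = Dd a x * (x-1)^2 * Q" by (simp add: Dd_def algebra_simps)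
  finally show ?thesis by (simp add: Q_def)
qed

lemma key_ineq:
  assumes a: "2 < a" and x: "-a < x" "x < 2" and fx: "-a < fmap a x" "fmap a x < 2"
  shows "1 / sqrt (Dd a x) \<le> (1 / kap a) * \<bar>1 / sqrt (Dd a (fmap a x)) * ((x-1)*(3*x+2*a-1))\<bar>"
proof -
  define Q where "Q = x^2 + a*x + 1"
  define e where "e = (a-2)*(a+4)/(2*a+5)"
  have Dx: "Dd a x > 0" using x by (simp add: Dd_def)
  have Dfx: "Dd a (fmap a x) > 0" using fx by (simp add: Dd_def)
  have DQ: "Dd a (fmap a x) = Dd a x * (x-1)^2 * Q" using Dd_f by (simp add: Q_def)
  have pos: "(x-1)^2 * Q > 0"
  proof -
    have "Dd a x * ((x-1)^2 * Q) > 0" using DQ Dfx by (simp add: mult.assoc)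
    thus ?thesis using Dx by (simp add: zero_less_mult_iff)
  qed
  have Q0: "Q > 0" and x1: "x \<noteq> 1"
    using pos by (auto simp: zero_less_mult_iff)
  have e0: "e > 0" using a by (simp add: e_def)
  have ineq: "(9 + e) * Q \<le> (3*x+2*a-1)^2"
  proof -
    have e1: "(3*x+2*a-1)^2 - 9*Q = (a-2)*(3*x+4*a+4)" by (simp add: Q_def power2_eq_square algebra_simps)
    have e2: "(a-2)*(a+4) \<le> (a-2)*(3*x+4*a+4)" using a x by (intro mult_left_mono) auto
    have e3: "Q \<le> 2*a+5"
    proof (cases "x \<ge> 0")
      case True
      have "x*(x+a) \<le> 2*(2+a)" using True x a by (intro mult_mono) auto
      thus ?thesis by (simp add: Q_def power2_eq_square algebra_simps)
    next
      case False
      have "x*(x+a) \<le> 0" using False x by (intro mult_nonpos_nonneg) auto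
      thus ?thesis using a by (simp add: Q_def power2_eq_square algebra_simps)
    qed
    have e4: "e * Q \<le> e * (2*a+5)" using e3 e0 by (intro mult_left_mono) auto
    have e5: "e * (2*a+5) = (a-2)*(a+4)" using a by (simp add: e_def)
    show ?thesis using e1 e2 e4 e5 by (simp add: algebra_simps)
  qed
  have kq: "kap a * sqrt Q \<le> \<bar>3*x+2*a-1\<bar>"
  proof -
    have "kap a * sqrt Q = sqrt ((9 + e) * Q)" by (simp add: kap_def e_def real_sqrt_mult)
    also have "\<dots> \<le> sqrt ((3*x+2*a-1)^2)" using ineq by (rule real_sqrt_le_mono)
    also have "\<dots> = \<bar>3*x+2*a-1\<bar>" by simp
    finally show ?thesis .
  qed
  have k3: "kap a > 3" using kap_gt3[OF a] .
  have sDf: "sqrt (Dd a (fmap a x)) = sqrt (Dd a x) * \<bar>x-1\<bar> * sqrt Q"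
    by (simp add: DQ real_sqrt_mult)
  have sDx: "sqrt (Dd a x) > 0" using Dx by simp
  have sQ: "sqrt Q > 0" using Q0 by simp
  have x1': "\<bar>x-1\<bar> > 0" using x1 by simp
  have sDf0: "sqrt (Dd a (fmap a x)) > 0" using Dfx by simp
  have R1: "\<bar>1 / sqrt (Dd a (fmap a x)) * ((x-1)*(3*x+2*a-1))\<bar> = \<bar>x-1\<bar> * \<bar>3*x+2*a-1\<bar> / sqrt (Dd a (fmap a x))"
    using sDf0 by (simp add: abs_mult)
  have R2: "(1 / kap a) * (y * c / (s * y * q)) = (1 / s) * (c / (kap a * q))"
    if "y > 0" "s > 0" "q > 0" for y c s q :: real
    using that k3 by (simp add: field_simps)
  have R: "(1 / kap a) * \<bar>1 / sqrt (Dd a (fmap a x)) * ((x-1)*(3*x+2*a-1))\<bar>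
        = (1 / sqrt (Dd a x)) * (\<bar>3*x+2*a-1\<bar> / (kap a * sqrt Q))"
  proof -
    have "(1 / kap a) * \<bar>1 / sqrt (Dd a (fmap a x)) * ((x-1)*(3*x+2*a-1))\<bar>
       = (1 / kap a) * (\<bar>x-1\<bar> * \<bar>3*x+2*a-1\<bar> / (sqrt (Dd a x) * \<bar>x-1\<bar> * sqrt Q))"
      by (subst R1, subst sDf, rule refl)
    also have "\<dots> = (1 / sqrt (Dd a x)) * (\<bar>3*x+2*a-1\<bar> / (kap a * sqrt Q))"
      by (rule R2[OF x1' sDx sQ])
    finally show ?thesis .
  qed
  have "1 \<le> \<bar>3*x+2*a-1\<bar> / (kap a * sqrt Q)"
    using kq k3 sQ by (simp add: le_divide_eq)
  hence "(1 / sqrt (Dd a x)) * 1 \<le> (1 / sqrt (Dd a x)) * (\<bar>3*x+2*a-1\<bar> / (kap a * sqrt Q))"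
    using sDx by (intro mult_left_mono) auto
  thus ?thesis using R by simp
qed

lemma funpow_isCont: "isCont (fmap a ^^ t) x"
proof (induction t arbitrary: x)
  case 0 thus ?case by simp
next
  case (Suc t)
  have "isCont (fmap a \<circ> (fmap a ^^ t)) x" by (rule continuous_at_compose[OF Suc fmap_isCont])
  thus ?case by (simp add: o_def)
qed

lemma fmap_D: "(fmap a has_real_derivative (z-1)*(3*z+2*a-1)) (at z)"
  using fmap_deriv[of a z UNIV] by simp

lemma phi_img_lmeas: assumes a: "0 < a" and A: "A \<in> sets lebesgue" "A \<subseteq> {-a<..<2}"
  shows "phi a ` A \<in> lmeasurable"
proof -
  have "phi a differentiable_on A"
    unfolding differentiable_on_def
  proof
    fix x assume "x \<in> A"
    hence x: "-a < x" "x < 2" using A by auto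
    have "(phi a has_real_derivative 1 / sqrt (Dd a x)) (at x within A)"
      using phi_deriv[OF a x] by (rule has_field_derivative_at_within)
    hence "phi a field_differentiable (at x within A)" using field_differentiable_def by blast
    thus "phi a differentiable (at x within A)" by (rule field_differentiable_imp_differentiable)
  qed
  hence "phi a ` A \<in> sets lebesgue" by (intro differentiable_image_in_sets_lebesgue[OF A(1)]) auto
  moreover have "A \<subseteq> {-a..2}" using A(2) by auto
  hence "bounded (phi a ` A)" using phi_bounded[OF a] by blast
  ultimately show ?thesis by (intro bounded_set_imp_lmeasurable)
qed

lemma fmap_img_sets: assumes A: "A \<in> sets lebesgue" shows "fmap a ` A \<in> sets lebesgue"
proof -
  have "fmap a differentiable_on A"
    unfolding differentiable_on_def
  proof
    fix x assume "x \<in> A"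
    have "(fmap a has_real_derivative (x-1)*(3*x+2*a-1)) (at x within A)" by (rule fmap_deriv)
    hence "fmap a field_differentiable (at x within A)" using field_differentiable_def by blast
    thus "fmap a differentiable (at x within A)" by (rule field_differentiable_imp_differentiable)
  qed
  thus ?thesis by (intro differentiable_image_in_sets_lebesgue[OF A]) auto
qed

lemma inj_neg: "inj_on (\<lambda>x. - F x) A \<Longrightarrow> inj_on (F :: real \<Rightarrow> real) A"
  unfolding inj_on_def by auto

lemma K_null:
  assumes a: "2 < a"
  shows "{x. \<forall>t. (fmap a ^^ t) x \<in> {-a..2}} \<in> null_sets lborel"
proof -
  define f where "f = fmap a"
  define K where "K = {x. \<forall>t. (f ^^ t) x \<in> {-a..2}}"
  have a0: "0 < a" using a by simp
  have Kclosed: "closed K"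
  proof -
    have "K = (\<Inter>t. (f ^^ t) -` {-a..2})" by (auto simp: K_def)
    moreover have "closed ((f ^^ t) -` {-a..2})" for t
      by (rule continuous_closed_vimage) (auto simp: f_def funpow_isCont)
    ultimately show ?thesis by auto
  qed
  have Ksub: "K \<subseteq> {-a..2}" unfolding K_def by (force dest: spec[of _ 0])
  have Kf: "f x \<in> K" if "x \<in> K" for x
  proof -
    have "(f ^^ t) (f x) \<in> {-a..2}" for t
    proof -
      have "(f ^^ t) (f x) = (f ^^ Suc t) x" by (simp only: funpow_Suc_right o_def)
      moreover have "(f ^^ Suc t) x \<in> {-a..2}" using that unfolding K_def by blast
      ultimately show ?thesis by simp
    qed
    thus ?thesis by (simp add: K_def)
  qed
  define K' where "K' = K \<inter> {-a<..<2}"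
  have K'sub: "K' \<subseteq> {-a<..<2}" by (auto simp: K'_def)
  have K'b: "K' \<in> sets borel" unfolding K'_def using Kclosed by (intro sets.Int borel_closed borel_open) auto
  hence K'l: "K' \<in> sets lebesgue" by simp
  define c2 where "c2 = (1 - 2*a)/3"
  have c2b: "-a < c2" "c2 < 1" using a by (auto simp: c2_def)
  define S where "S l u = {x \<in> {l<..<u}. f x \<in> K'}" for l u
  define F where "F = {x. f x = -a} \<union> {x. f x = 2}"
  have Ffin: "finite F" unfolding F_def f_def using fin_pre1 by auto
  have cover: "K' \<subseteq> (F \<union> {c2, 1}) \<union> S (-a) c2 \<union> S c2 1 \<union> S 1 2"
  proof
    fix x assume xK: "x \<in> K'"
    hence xi: "-a < x" "x < 2" and xK0: "x \<in> K" by (auto simp: K'_def)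
    have fK: "f x \<in> K" using Kf[OF xK0] .
    show "x \<in> (F \<union> {c2, 1}) \<union> S (-a) c2 \<union> S c2 1 \<union> S 1 2"
    proof (cases "f x = -a \<or> f x = 2")
      case True thus ?thesis by (auto simp: F_def)
    next
      case False
      hence "f x \<in> K'" using fK Ksub by (force simp: K'_def)
      thus ?thesis using xi by (auto simp: S_def)
    qed
  qed
  define ph where "ph = phi a"
  define mu where "mu A = measure lebesgue (ph ` A)" for A
  define k where "k = kap a"
  have k3: "k > 3" using kap_gt3[OF a] by (simp add: k_def)
  have Sb: "S l u \<in> sets lebesgue" for l u
  proof -
    have "S l u = {l<..<u} \<inter> f -` K \<inter> f -` {-a<..<2}" by (auto simp: S_def K'_def)
    moreover have "closed (f -` K)" using Kclosed by (rule continuous_closed_vimage) (simp add: f_def fmap_isCont)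
    moreover have "open (f -` {-a<..<2})" by (rule continuous_open_vimage) (auto simp: f_def fmap_isCont)
    ultimately have "S l u \<in> sets borel" by (auto intro!: sets.Int borel_closed borel_open)
    thus ?thesis by simp
  qed
  have branch: "mu (S l u) \<le> (1/k) * mu K'"
    if lu: "-a \<le> l" "u \<le> 2" and injf: "inj_on f {l<..<u}" for l u
  proof -
    have Ssub: "S l u \<subseteq> {-a<..<2}" using lu by (auto simp: S_def)
    have fS: "f ` S l u \<subseteq> K'" by (auto simp: S_def)
    have oc: "{-a<..<2} \<subseteq> {-a..2}" by auto
    have fS2: "f ` S l u \<subseteq> {-a..2}" using fS K'sub oc by blast
    have m1: "measure lebesgue (ph ` S l u) \<le> (1/k) * measure lebesgue ((\<lambda>x. ph (f x)) ` S l u)"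
    proof (rule meas_cmp[where g' = "\<lambda>x. 1 / sqrt (Dd a x)"
          and h' = "\<lambda>x. 1 / sqrt (Dd a (f x)) * ((x-1)*(3*x+2*a-1))"])
      show "S l u \<in> sets lebesgue" by (rule Sb)
      fix x assume xS: "x \<in> S l u"
      hence x: "-a < x" "x < 2" using Ssub by auto
      have "f x \<in> K'" using xS by (simp add: S_def)
      hence fx: "-a < f x" "f x < 2" using K'sub by auto
      show "(ph has_real_derivative 1 / sqrt (Dd a x)) (at x)"
        unfolding ph_def by (rule phi_deriv[OF a0 x])
      show "((\<lambda>x. ph (f x)) has_real_derivative 1 / sqrt (Dd a (f x)) * ((x-1)*(3*x+2*a-1))) (at x)"
        unfolding ph_def f_def using DERIV_chain2[OF phi_deriv[OF a0 fx[unfolded f_def]] fmap_D] .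
      show "\<bar>1 / sqrt (Dd a x)\<bar> \<le> 1 / k * \<bar>1 / sqrt (Dd a (f x)) * ((x - 1) * (3 * x + 2 * a - 1))\<bar>"
        using key_ineq[OF a x fx[unfolded f_def]] x by (simp add: f_def k_def Dd_def)
    next
      show "inj_on ph (S l u)" unfolding ph_def using Ssub by (intro inj_on_subset[OF phi_inj[OF a0]]) auto
      have i1: "inj_on f (S l u)" using injf by (rule inj_on_subset) (auto simp: S_def)
      have i2: "inj_on ph (f ` S l u)" unfolding ph_def
        using fS2 by (rule inj_on_subset[OF phi_inj[OF a0]])
      have "inj_on (ph \<circ> f) (S l u)" by (rule comp_inj_on[OF i1 i2])
      thus "inj_on (\<lambda>x. ph (f x)) (S l u)" by (simp add: o_def)
      show "bounded (ph ` S l u)" unfolding ph_def using Ssub by (intro phi_bounded[OF a0]) auto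
      have "(\<lambda>x. ph (f x)) ` S l u = ph ` (f ` S l u)" by (simp add: image_image)
      thus "bounded ((\<lambda>x. ph (f x)) ` S l u)" unfolding ph_def using phi_bounded[OF a0 fS2] by simp
    qed
    have "measure lebesgue ((\<lambda>x. ph (f x)) ` S l u) \<le> mu K'"
    proof -
      have e: "(\<lambda>x. ph (f x)) ` S l u = ph ` (f ` S l u)" by (simp add: image_image)
      have "f ` S l u \<in> sets lebesgue" unfolding f_def by (rule fmap_img_sets[OF Sb])
      hence "ph ` (f ` S l u) \<in> lmeasurable" unfolding ph_def using fS K'sub by (intro phi_img_lmeas[OF a0]) auto
      moreover have "ph ` K' \<in> lmeasurable" unfolding ph_def by (rule phi_img_lmeas[OF a0 K'l K'sub])
      moreover have "ph ` (f ` S l u) \<subseteq> ph ` K'" using fS by auto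
      ultimately show ?thesis unfolding e mu_def by (intro measure_mono_fmeasurable) auto
    qed
    hence "(1/k) * measure lebesgue ((\<lambda>x. ph (f x)) ` S l u) \<le> (1/k) * mu K'"
      using k3 by (intro mult_left_mono) auto
    thus ?thesis using m1 by (simp add: mu_def)
  qed
  have fder: "(f has_real_derivative (x-1)*(3*x+2*a-1)) (at x)" for x unfolding f_def by (rule fmap_D)
  have inj1: "inj_on f {-a<..<c2}"
  proof (rule inj_deriv_pos[OF fder])
    fix x assume "x \<in> {-a<..<c2}"
    hence "x - 1 < 0" "3*x+2*a-1 < 0" using c2b by (auto simp: c2_def)
    thus "(x-1)*(3*x+2*a-1) > 0" by (simp add: mult_neg_neg)
  qed
  have inj2: "inj_on f {c2<..<1}"
  proof (rule inj_neg, rule inj_deriv_pos)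
    fix x
    show "((\<lambda>x. - f x) has_real_derivative - ((x-1)*(3*x+2*a-1))) (at x)" using fder by (rule DERIV_minus)
    assume "x \<in> {c2<..<1}"
    hence "x - 1 < 0" "3*x+2*a-1 > 0" by (auto simp: c2_def)
    thus "- ((x-1)*(3*x+2*a-1)) > 0" by (simp add: mult_neg_pos)
  qed
  have inj3: "inj_on f {1<..<2}"
  proof (rule inj_deriv_pos[OF fder])
    fix x :: real assume "x \<in> {1<..<2}"
    hence "x - 1 > 0" "3*x+2*a-1 > 0" using a by auto
    thus "(x-1)*(3*x+2*a-1) > 0" by simp
  qed
  have b1: "mu (S (-a) c2) \<le> (1/k) * mu K'" by (rule branch) (use c2b inj1 in auto)
  have b2: "mu (S c2 1) \<le> (1/k) * mu K'" by (rule branch) (use c2b inj2 in auto)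
  have b3: "mu (S 1 2) \<le> (1/k) * mu K'" by (rule branch) (use inj3 a in auto)
  have lS: "ph ` S l u \<in> lmeasurable" if "-a \<le> l" "u \<le> 2" for l u
    unfolding ph_def using that by (intro phi_img_lmeas[OF a0 Sb]) (auto simp: S_def)
  have l1: "ph ` S (-a) c2 \<in> lmeasurable" using lS c2b by auto
  have l2: "ph ` S c2 1 \<in> lmeasurable" using lS c2b by auto
  have l3: "ph ` S 1 2 \<in> lmeasurable" using lS[of 1 2] a by auto
  have fin0: "finite (ph ` (F \<union> {c2, 1}))" using Ffin by simp
  hence n0: "negligible (ph ` (F \<union> {c2, 1}))" by (rule negligible_finite)
  hence l0: "ph ` (F \<union> {c2, 1}) \<in> lmeasurable" and m0: "measure lebesgue (ph ` (F \<union> {c2, 1})) = 0"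
    by (auto simp: negligible_iff_measure)
  have lK: "ph ` K' \<in> lmeasurable" unfolding ph_def by (rule phi_img_lmeas[OF a0 K'l K'sub])
  define A0 where "A0 = ph ` (F \<union> {c2, 1})"
  define A1 where "A1 = ph ` S (-a) c2"
  define A2 where "A2 = ph ` S c2 1"
  define A3 where "A3 = ph ` S 1 2"
  have sub: "ph ` K' \<subseteq> A0 \<union> A1 \<union> A2 \<union> A3"
    using cover unfolding A0_def A1_def A2_def A3_def by blast
  note L = l0[folded A0_def] l1[folded A1_def] l2[folded A2_def] l3[folded A3_def]
  have U01: "A0 \<union> A1 \<in> lmeasurable" using L by (intro fmeasurable.Un)
  have U012: "A0 \<union> A1 \<union> A2 \<in> lmeasurable" using L U01 by (intro fmeasurable.Un)
  have U0123: "A0 \<union> A1 \<union> A2 \<union> A3 \<in> lmeasurable" using L U012 by (intro fmeasurable.Un)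
  have "mu K' \<le> measure lebesgue (A0 \<union> A1 \<union> A2 \<union> A3)"
    unfolding mu_def using sub lK U0123 by (intro measure_mono_fmeasurable) (auto dest: fmeasurableD)
  also have "\<dots> \<le> measure lebesgue (A0 \<union> A1 \<union> A2) + measure lebesgue A3"
    using L U012 by (intro measure_Un_le) (auto dest: fmeasurableD)
  also have "\<dots> \<le> measure lebesgue (A0 \<union> A1) + measure lebesgue A2 + measure lebesgue A3"
    using L U01 by (intro add_right_mono measure_Un_le) (auto dest: fmeasurableD)
  also have "\<dots> \<le> measure lebesgue A0 + measure lebesgue A1 + measure lebesgue A2 + measure lebesgue A3"
    using L by (intro add_right_mono measure_Un_le) (auto dest: fmeasurableD)
  also have "\<dots> \<le> 0 + (1/k) * mu K' + (1/k) * mu K' + (1/k) * mu K'"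
    using m0 b1 b2 b3 unfolding A0_def A1_def A2_def A3_def mu_def by linarith
  finally have "mu K' \<le> (3/k) * mu K'" by simp
  moreover have "mu K' \<ge> 0" by (simp add: mu_def)
  moreover have "3/k < 1" using k3 by simp
  ultimately have "mu K' = 0"
  proof -
    assume h: "mu K' \<le> (3/k) * mu K'" "mu K' \<ge> 0" "3/k < 1"
    show ?thesis
    proof (rule ccontr)
      assume "mu K' \<noteq> 0"
      hence "mu K' > 0" using h(2) by simp
      hence "(3/k) * mu K' < 1 * mu K'" using h(3) by (intro mult_strict_right_mono)
      thus False using h(1) by simp
    qed
  qed
  hence negK: "negligible (ph ` K')" using lK by (simp add: negligible_iff_measure mu_def)
  have "negligible {x \<in> {-a<..<2}. ph x \<in> ph ` K'}"
  proof (rule negligible_differentiable_vimage[OF negK, where f' = "\<lambda>x. (*) (1 / sqrt (Dd a x))"])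
    fix x assume "x \<in> {-a<..<2}"
    hence x: "-a < x" "x < 2" by auto
    have "Dd a x > 0" using x by (simp add: Dd_def)
    hence nz: "1 / sqrt (Dd a x) \<noteq> 0" by simp
    show "inj ((*) (1 / sqrt (Dd a x)))" using nz by (simp add: inj_on_def)
    have "(ph has_derivative (*) (1 / sqrt (Dd a x))) (at x)"
      using phi_deriv[OF a0 x] by (simp add: ph_def has_field_derivative_def)
    thus "(ph has_derivative (*) (1 / sqrt (Dd a x))) (at x within {-a<..<2})"
      by (rule has_derivative_at_withinI)
  qed
  moreover have "K' \<subseteq> {x \<in> {-a<..<2}. ph x \<in> ph ` K'}" using K'sub by auto
  ultimately have "negligible K'" by (rule negligible_subset)
  moreover have "K \<subseteq> K' \<union> {-a, 2}" using Ksub by (auto simp: K'_def)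
  ultimately have "negligible K" by (metis negligible_Un negligible_finite finite.intros negligible_subset)
  hence "K \<in> null_sets lebesgue" by (simp add: negligible_iff_null_sets)
  moreover have "K \<in> sets lborel" using Kclosed by (simp add: borel_closed)
  ultimately have "K \<in> null_sets lborel" using null_sets_completion_iff by blast
  thus ?thesis by (simp add: K_def f_def)
qed

lemma sq_le_of_abs: "\<bar>x::real\<bar> \<le> \<bar>y\<bar> \<Longrightarrow> x^2 \<le> y^2"
  by (simp add: abs_le_square_iff)

theorem corollary1:
  fixes \<eta> \<gamma> :: real and X :: "'n::finite \<Rightarrow> real ^ 'd" and a :: "'n \<Rightarrow> real"
  assumes "\<eta> > 0" and "\<gamma> \<noteq> 0"
    and "\<And>i. X i \<noteq> 0" and "\<And>i. a i > 0"
  shows "AE z0 in lebesgue. z0 \<in> init_box a \<longrightarrow>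
     ((0 < Max (range a) \<and> Max (range a) \<le> 1 \<longrightarrow> loss \<eta> \<gamma> X a z0 \<longlonglongrightarrow> 0)
    \<and> (0 < Max (range a) \<and> Max (range a) \<le> 2 * sqrt 2 - 2 \<longrightarrow> decseq (loss \<eta> \<gamma> X a z0))
    \<and> (1 < Max (range a) \<and> Max (range a) \<le> 2 \<longrightarrow>
         Bseq (loss \<eta> \<gamma> X a z0) \<and> \<not> (loss \<eta> \<gamma> X a z0 \<longlonglongrightarrow> 0))
    \<and> (Max (range a) > 2 \<longrightarrow> filterlim (loss \<eta> \<gamma> X a z0) at_top sequentially))"
proof -
  note eta = assms(1) and gam = assms(2) and Xnz = assms(3) and apos = assms(4)
  define M where "M = Max (range a)"
  have aM: "a i \<le> M" for i unfolding M_def by (rule Max_ge) auto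
  obtain i0 where i0: "a i0 = M"
  proof -
    have "M \<in> range a" unfolding M_def by (rule Max_in) auto
    thus ?thesis using that by auto
  qed
  define c where "c i = real CARD('n) / (2 * \<eta>^2 * \<gamma>^2 * norm (X i)^4)" for i
  have cpos: "c i > 0" for i using eta gam Xnz[of i] by (simp add: c_def)
  have loss_eq: "loss \<eta> \<gamma> X a z0 t = (\<Sum>i\<in>UNIV. c i * (traj a z0 t i)^2)" for z0 t
    unfolding loss_def c_def by (intro sum.cong) auto
  define N where "N i = {x. \<exists>t. (fmap (a i) ^^ t) x \<in> {-(a i), 1, 2, 0}}
      \<union> (if a i > 2 then {x. \<forall>t. (fmap (a i) ^^ t) x \<in> {-(a i)..2}} else {})" for i
  have Nnull: "N i \<in> null_sets lborel" for i
  proof -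
    have "countable {x. \<exists>t. (fmap (a i) ^^ t) x \<in> {-(a i), 1, 2, 0}}" by (rule count_orbit) simp
    hence A: "{x. \<exists>t. (fmap (a i) ^^ t) x \<in> {-(a i), 1, 2, 0}} \<in> null_sets lborel"
      by (rule countable_imp_null_set_lborel)
    have B: "(if a i > 2 then {x. \<forall>t. (fmap (a i) ^^ t) x \<in> {-(a i)..2}} else {}) \<in> null_sets lborel"
      using K_null[of "a i"] by auto
    show ?thesis unfolding N_def using A B by (rule null_sets.Un)
  qed
  have AEg: "AE z0 in lborel. \<forall>i\<in>UNIV. z0 $ i \<notin> N i"
  proof (rule AE_finite_allI)
    fix i :: 'n
    show "AE z0 in lborel. z0 $ i \<notin> N i"
      using AE_not_in[OF coord_null_vec[OF Nnull[of i], of i]] by simp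
  qed simp
  hence AEg': "AE z0 in lebesgue. \<forall>i\<in>UNIV. z0 $ i \<notin> N i" by (rule AE_completion)
  show ?thesis unfolding M_def[symmetric]
  proof (rule AE_mp[OF AEg'], rule AE_I2, intro impI)
    fix z0 :: "real^'n"
    assume good: "\<forall>i\<in>UNIV. z0 $ i \<notin> N i" and box: "z0 \<in> init_box a"
    define u where "u i t = (fmap (a i) ^^ t) (z0 $ i)" for i t
    have ut: "traj a z0 t i = u i t" for t i by (simp add: traj_def u_def)
    have L: "loss \<eta> \<gamma> X a z0 t = (\<Sum>i\<in>UNIV. c i * (u i t)^2)" for t by (simp add: loss_eq ut)
    have Lfun: "loss \<eta> \<gamma> X a z0 = (\<lambda>t. \<Sum>i\<in>UNIV. c i * (u i t)^2)" by (rule ext) (rule L)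
    have xb: "-(a i) \<le> z0 $ i" "z0 $ i \<le> 2" for i using box by (auto simp: init_box_def)
    have av: "\<forall>t. u i t \<notin> {-(a i), 1, 2, 0}" for i
      using good unfolding N_def u_def by auto
    have P1: "u i \<longlonglongrightarrow> 0" if "a i \<le> 1" for i
    proof -
      have "(\<lambda>t. (fmap (a i) ^^ t) (z0 $ i)) \<longlonglongrightarrow> 0"
        by (rule C4[OF apos[of i] that xb[of i]]) (use av[of i] in \<open>auto simp: u_def\<close>)
      thus ?thesis by (simp add: u_def[abs_def])
    qed
    have P2: "\<not> u i \<longlonglongrightarrow> 0" if ai: "1 < a i" "a i \<le> 2" for i
    proof
      assume "u i \<longlonglongrightarrow> 0"
      hence "(\<lambda>t. (fmap (a i) ^^ t) (z0 $ i)) \<longlonglongrightarrow> 0" by (simp add: u_def[abs_def])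
      then obtain t where "(fmap (a i) ^^ t) (z0 $ i) = 0" using D[OF ai] by blast
      thus False using av[of i] by (auto simp: u_def)
    qed
    have P3: "filterlim (u i) at_top sequentially" if "a i > 2" for i
    proof -
      have "z0 $ i \<notin> N i" using good by blast
      hence "z0 $ i \<notin> {x. \<forall>t. (fmap (a i) ^^ t) x \<in> {-(a i)..2}}"
        using that unfolding N_def by simp
      hence "\<exists>t. (fmap (a i) ^^ t) (z0 $ i) \<notin> {-(a i)..2}" by auto
      from E_escape[OF that xb(1)[of i] this] show ?thesis by (simp add: u_def[abs_def])
    qed
    have P4: "-(a i) \<le> u i t \<and> u i t \<le> 2" if "a i \<le> 2" for i t
      unfolding u_def by (rule inv_iter[OF apos that xb[of i]])
    have s2: "2 * sqrt 2 - 2 \<le> (2::real)"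
    proof -
      have "sqrt 2 \<le> sqrt (4::real)" by (rule real_sqrt_le_mono) simp
      moreover have "sqrt (4::real) = 2"
      proof -
        have "(4::real) = 2^2" by simp
        thus ?thesis by simp
      qed
      ultimately show ?thesis by simp
    qed
    have P5: "\<bar>u i (Suc t)\<bar> \<le> \<bar>u i t\<bar>" if "a i \<le> 2 * sqrt 2 - 2" for i t
    proof -
      have "a i \<le> 2" using that s2 by simp
      hence "-(a i) \<le> u i t" "u i t \<le> 2" using P4 by auto
      thus ?thesis using decr_step[OF apos that] by (simp add: u_def)
    qed
    show "(0 < M \<and> M \<le> 1 \<longrightarrow> loss \<eta> \<gamma> X a z0 \<longlonglongrightarrow> 0)
      \<and> (0 < M \<and> M \<le> 2 * sqrt 2 - 2 \<longrightarrow> decseq (loss \<eta> \<gamma> X a z0))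
      \<and> (1 < M \<and> M \<le> 2 \<longrightarrow> Bseq (loss \<eta> \<gamma> X a z0) \<and> \<not> (loss \<eta> \<gamma> X a z0 \<longlonglongrightarrow> 0))
      \<and> (M > 2 \<longrightarrow> filterlim (loss \<eta> \<gamma> X a z0) at_top sequentially)"
    proof (intro conjI impI)
      assume "0 < M \<and> M \<le> 1"
      hence "u i \<longlonglongrightarrow> 0" for i using P1 aM order_trans by blast
      hence "(\<lambda>t. \<Sum>i\<in>UNIV. c i * (u i t)^2) \<longlonglongrightarrow> (\<Sum>i\<in>UNIV. c i * 0^2)"
        by (intro tendsto_intros)
      thus "loss \<eta> \<gamma> X a z0 \<longlonglongrightarrow> 0" by (simp add: Lfun)
    next
      assume h: "0 < M \<and> M \<le> 2 * sqrt 2 - 2"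
      show "decseq (loss \<eta> \<gamma> X a z0)"
      proof (rule decseq_SucI)
        fix t
        have "c i * (u i (Suc t))^2 \<le> c i * (u i t)^2" for i
          using P5[of i t] aM[of i] h cpos[of i] by (intro mult_left_mono sq_le_of_abs) auto
        thus "loss \<eta> \<gamma> X a z0 (Suc t) \<le> loss \<eta> \<gamma> X a z0 t" by (simp add: L sum_mono)
      qed
    next
      assume h: "1 < M \<and> M \<le> 2"
      have le2: "a i \<le> 2" for i using aM[of i] h by simp
      show "Bseq (loss \<eta> \<gamma> X a z0)"
      proof (rule BseqI')
        fix t
        have b: "c i * (u i t)^2 \<le> c i * 2^2" for i
        proof -
          have "\<bar>u i t\<bar> \<le> \<bar>2\<bar>" using P4[OF le2, of i t] le2[of i] by auto
          thus ?thesis using cpos[of i] by (intro mult_left_mono sq_le_of_abs) auto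
        qed
        have nn: "0 \<le> (\<Sum>i\<in>UNIV. c i * (u i t)^2)" using cpos by (intro sum_nonneg) (simp add: less_imp_le)
        have "(\<Sum>i\<in>UNIV. c i * (u i t)^2) \<le> (\<Sum>i\<in>UNIV. c i * 2^2)" using b by (rule sum_mono)
        thus "norm (loss \<eta> \<gamma> X a z0 t) \<le> (\<Sum>i\<in>UNIV. c i * 2^2)" using nn by (simp add: L)
      qed
      show "\<not> loss \<eta> \<gamma> X a z0 \<longlonglongrightarrow> 0"
      proof
        assume lim: "loss \<eta> \<gamma> X a z0 \<longlonglongrightarrow> 0"
        have le: "c i0 * (u i0 t)^2 \<le> loss \<eta> \<gamma> X a z0 t" for t
          unfolding L using cpos by (intro member_le_sum) (auto simp: less_imp_le)
        have "(\<lambda>t. c i0 * (u i0 t)^2) \<longlonglongrightarrow> 0"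
          by (rule tendsto_sandwich[of "\<lambda>_. 0" _ _ "loss \<eta> \<gamma> X a z0"]) (use le lim cpos[of i0] in auto)
        hence "(\<lambda>t. (1 / c i0) * (c i0 * (u i0 t)^2)) \<longlonglongrightarrow> (1 / c i0) * 0"
          by (intro tendsto_intros)
        hence "(\<lambda>t. (u i0 t)^2) \<longlonglongrightarrow> 0" using cpos[of i0] by simp
        hence "(\<lambda>t. sqrt ((u i0 t)^2)) \<longlonglongrightarrow> sqrt 0" by (intro tendsto_intros)
        hence "(\<lambda>t. \<bar>u i0 t\<bar>) \<longlonglongrightarrow> 0" by simp
        hence "u i0 \<longlonglongrightarrow> 0" by (simp add: tendsto_rabs_zero_iff)
        thus False using P2[of i0] i0 h by simp
      qed
    next
      assume h: "M > 2"
      have f1: "filterlim (\<lambda>t. (u i0 t)^2) at_top sequentially"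
        by (rule filterlim_pow_at_top) (use P3[of i0] i0 h in auto)
      have f2: "filterlim (\<lambda>t. c i0 * (u i0 t)^2) at_top sequentially"
        by (rule filterlim_tendsto_pos_mult_at_top[OF tendsto_const cpos f1])
      have le: "c i0 * (u i0 t)^2 \<le> loss \<eta> \<gamma> X a z0 t" for t
        unfolding L using cpos by (intro member_le_sum) (auto simp: less_imp_le)
      show "filterlim (loss \<eta> \<gamma> X a z0) at_top sequentially"
        by (rule filterlim_at_top_mono[OF f2]) (use le in auto)
    qed
  qed
qed


end
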